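(* Let $f:\mathbb{Z}^n\to\mathbb{R}\cup\{+\infty\}$ be M-convex with bounded $\operatorname{dom} f$, and $\emptyset\neq R\subsetneq N$. Let $k$ be an integer with $\underline{k}\le k\le\overline{k}-2$, let $x\in M(k)$, and let $i\in R$, $j\in N\setminus R$ minimize $f'(x;i,j)$ over $i\in R$, $j\in N\setminus R$. If $f'(x+\chi_i-\chi_j;i,j)=f'(x;i,j)$, then $f'(x+\chi_i-\chi_j;i,j)\le f'(x+\chi_i-\chi_j;h,\ell)$ for all $h\in R$, $\ell\in N\setminus R$, and $x+2\chi_i-2\chi_j\in M(k+2)$.
   Context: $N=\{1,\dots,n\}$; $\chi_i\in\{0,1\}^n$ is the $i$-th unit vector; $x(R)=\sum_{i\in R}x(i)$. For $f:\mathbb{Z}^n\to\mathbb{R}\cup\{+\infty\}$, $\operatorname{dom} f=\{x\in\mathbb{Z}^n: f(x)<+\infty\}$. $f$ is M-convex if $\operatorname{dom} f\neq\emptyset$ and for all $x,y\in\operatorname{dom} f$ and every $i$ with $x(i)>y(i)$ there is $j$ with $x(j)<y(j)$ such that $f(x)+f(y)\ge f(x-\chi_i+\chi_j)+f(y+\chi_i-\chi_j)$. $f'(x;i,j)=f(x+\chi_i-\chi_j)-f(x)$ (possibly $+\infty$). $\underline{k}=\min\{x(R):x\in\operatorname{dom} f\}$, $\overline{k}=\max\{x(R):x\in\operatorname{dom} f\}$; for $\underline{k}\le k\le\overline{k}$, $z(k)=\min\{f(x): x(R)=k,\ x\in\operatorname{dom} f\}$ and $M(k)=\{x\in\operatorname{dom}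 f: x(R)=k,\ f(x)=z(k)\}$. *)

theory Defs
  imports Complex_Main "HOL-Library.Extended_Real" "HOL-Library.Function_Algebras"
begin

text \<open>Ground set N is the finite type 'a; points of Z^N are functions 'a \<Rightarrow> int;
  functions take values in ereal (we additionally require the value -\<infinity> never occurs).\<close>

definition unitv :: "'a \<Rightarrow> 'a \<Rightarrow> int" where
  "unitv i = (\<lambda>j. if j = i then 1 else 0)"

definition effdom :: "(('a \<Rightarrow> int) \<Rightarrow> ereal) \<Rightarrow> ('a \<Rightarrow> int) set" where
  "effdom f = {x. f x < \<infinity>}"

definition M_convex :: "(('a \<Rightarrow> int) \<Rightarrow> ereal) \<Rightarrow> bool" where
  "M_convex f \<longleftrightarrow> effdom f \<noteq> {} \<and>
     (\<forall>x\<in>effdom f. \<forall>y\<in>effdom f. \<forall>i. x i > y i \<longrightarrow>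
        (\<exists>j. x j < y j \<and>
             f x + f y \<ge> f (x - unitv i + unitv j) + f (y + unitv i - unitv j)))"

definition dirder :: "(('a \<Rightarrow> int) \<Rightarrow> ereal) \<Rightarrow> ('a \<Rightarrow> int) \<Rightarrow> 'a \<Rightarrow> 'a \<Rightarrow> ereal" where
  "dirder f x i j = f (x + unitv i - unitv j) - f x"

definition klow :: "(('a \<Rightarrow> int) \<Rightarrow> ereal) \<Rightarrow> 'a set \<Rightarrow> int" where
  "klow f R = Min ((\<lambda>x. sum x R) ` effdom f)"

definition kupp :: "(('a \<Rightarrow> int) \<Rightarrow> ereal) \<Rightarrow> 'a set \<Rightarrow> int" where
  "kupp f R = Max ((\<lambda>x. sum x R) ` effdom f)"

definition zval :: "(('a \<Rightarrow> int) \<Rightarrow> ereal) \<Rightarrow> 'a set \<Rightarrow> int \<Rightarrow> ereal" where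
  "zval f R k = Inf (f ` {x\<in>effdom f. sum x R = k})"

definition Mset :: "(('a \<Rightarrow> int) \<Rightarrow> ereal) \<Rightarrow> 'a set \<Rightarrow> int \<Rightarrow> ('a \<Rightarrow> int) set" where
  "Mset f R k = {x\<in>effdom f. sum x R = k \<and> f x = zval f R k}"

end

theory Submission
  imports Defs
begin

lemma sum_shift:
  fixes x :: "'a::finite \<Rightarrow> int"
  shows "sum (x + unitv h - unitv l) R = sum x R + (if h \<in> R then 1 else 0) - (if l \<in> R then 1 else 0)"
proof -
  have "sum (x + unitv h - unitv l) R = (\<Sum>a\<in>R. x a + unitv h a - unitv l a)"
    by simp
  also have "\<dots> = sum x R + sum (unitv h) R - sum (unitv l) R"
    by (simp add: sum.distrib sum_subtractf)
  also have "sum (unitv h) R = (if h \<in> R then 1 else 0)"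
    unfolding unitv_def by (simp add: sum.delta)
  also have "sum (unitv l) R = (if l \<in> R then 1 else 0)"
    unfolding unitv_def by (simp add: sum.delta)
  finally show ?thesis .
qed

lemma measure_dec:
  fixes x v :: "'a::finite \<Rightarrow> int"
  assumes "v h > x h" "v l < x l"
  shows "(\<Sum>a\<in>UNIV. \<bar>(v - unitv h + unitv l) a - x a\<bar>) = (\<Sum>a\<in>UNIV. \<bar>v a - x a\<bar>) - 2"
proof -
  have hl: "h \<noteq> l" using assms by auto
  have pw: "\<And>a. \<bar>(v - unitv h + unitv l) a - x a\<bar> = \<bar>v a - x a\<bar> - unitv h a - unitv l a"
    using assms hl by (auto simp: unitv_def)
  have "(\<Sum>a\<in>UNIV. \<bar>(v - unitv h + unitv l) a - x a\<bar>) = (\<Sum>a\<in>UNIV. \<bar>v a - x a\<bar> - unitv h a - unitv l a)"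
    using pw by simp
  also have "\<dots> = (\<Sum>a\<in>UNIV. \<bar>v a - x a\<bar>) - sum (unitv h) UNIV - sum (unitv l) UNIV"
    by (simp add: sum_subtractf)
  also have "sum (unitv h) UNIV = 1" unfolding unitv_def by (simp add: sum.delta)
  also have "sum (unitv l) UNIV = 1" unfolding unitv_def by (simp add: sum.delta)
  finally show ?thesis by simp
qed

lemma swap_eq: "(v::'a \<Rightarrow> int) - unitv h + unitv l = v + unitv l - unitv h"
  by (rule ext) simp

lemma measure_lt:
  fixes x v :: "'a::finite \<Rightarrow> int"
  assumes "v h > x h" "v l < x l"
  shows "nat (\<Sum>a\<in>UNIV. \<bar>(v - unitv h + unitv l) a - x a\<bar>) < nat (\<Sum>a\<in>UNIV. \<bar>v a - x a\<bar>)"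
proof -
  have "0 \<le> (\<Sum>a\<in>UNIV. \<bar>(v - unitv h + unitv l) a - x a\<bar>)" by (rule sum_nonneg) simp
  then show ?thesis using measure_dec[OF assms] by linarith
qed

lemma exch:
  assumes "M_convex f" "f v < \<infinity>" "f x < \<infinity>" "v h > x h"
  shows "\<exists>l. v l < x l \<and> f (v - unitv h + unitv l) + f (x + unitv h - unitv l) \<le> f v + f x"
  using assms unfolding M_convex_def effdom_def by auto

lemma bigger_elem:
  fixes x v :: "'a::finite \<Rightarrow> int"
  assumes "sum x R < sum v R"
  shows "\<exists>h\<in>R. x h < v h"
proof (rule ccontr)
  assume "\<not> ?thesis"
  then have "sum v R \<le> sum x R" by (intro sum_mono) auto
  with assms show False by simp
qed

lemma ereal_cancel:
  fixes a b c :: ereal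
  assumes "c \<noteq> \<infinity>" "c \<noteq> -\<infinity>" "c + a \<le> b + c"
  shows "a \<le> b"
  using assms by (cases a; cases b; cases c) auto

lemma ereal_fin_sum:
  fixes a b :: ereal
  assumes "a + b \<le> c" "c < \<infinity>" "a \<noteq> -\<infinity>" "b \<noteq> -\<infinity>"
  shows "a < \<infinity> \<and> b < \<infinity>"
  using assms by (cases a; cases b; cases c) auto

lemma nbr_exists:
  fixes f :: "('a::finite \<Rightarrow> int) \<Rightarrow> ereal"
  assumes M: "M_convex f" and ni: "\<forall>y. f y \<noteq> -\<infinity>" and xd: "f x < \<infinity>"
  shows "f v < \<infinity> \<Longrightarrow> sum x R < sum v R \<Longrightarrow> \<exists>h\<in>R. \<exists>l. l \<notin> R \<and> f (x + unitv h - unitv l) < \<infinity>"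
proof (induction "nat (\<Sum>a\<in>UNIV. \<bar>v a - x a\<bar>)" arbitrary: v rule: less_induct)
  case less
  obtain h where h: "h \<in> R" "x h < v h" using bigger_elem[OF less.prems(2)] by auto
  obtain l where l: "v l < x l" and ineq: "f (v - unitv h + unitv l) + f (x + unitv h - unitv l) \<le> f v + f x"
    using exch[OF M less.prems(1) xd h(2)] by blast
  have fs: "f v + f x < \<infinity>" using less.prems(1) xd ni by (cases "f v"; cases "f x") auto
  have fin: "f (v - unitv h + unitv l) < \<infinity>" "f (x + unitv h - unitv l) < \<infinity>"
    using ereal_fin_sum[OF ineq fs] ni by auto
  show ?case
  proof (cases "l \<in> R")
    case False
    then show ?thesis using h fin by blast
  next
    case True
    have s: "sum (v - unitv h + unitv l) R = sum v R"
      using sum_shift[of v l h R] True h(1) by (simp add: swap_eq)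
    show ?thesis
      apply (rule less.hyps[of "v - unitv h + unitv l"])
      using measure_lt[of x h v l] h l fin(1) s less.prems by auto
  qed
qed


lemma step_bound:
  fixes f :: "('a::finite \<Rightarrow> int) \<Rightarrow> ereal"
  assumes M: "M_convex f" and ni: "\<forall>y. f y \<noteq> -\<infinity>" and xd: "f x < \<infinity>"
    and xmin: "\<forall>a. sum a R = sum x R \<longrightarrow> f x \<le> f a" and Rp: "R \<noteq> UNIV"
  shows "sum v R = sum x R + 1 \<Longrightarrow> \<exists>h\<in>R. \<exists>l. l \<notin> R \<and> f (x + unitv h - unitv l) \<le> f v"
proof (induction "nat (\<Sum>a\<in>UNIV. \<bar>v a - x a\<bar>)" arbitrary: v rule: less_induct)
  case less
  obtain h where h: "h \<in> R" "x h < v h" using bigger_elem[of x R v] less.prems by auto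
  show ?case
  proof (cases "f v < \<infinity>")
    case False
    obtain l where "l \<notin> R" using Rp by auto
    moreover have "f v = \<infinity>" using False by (simp add: less_top)
    ultimately show ?thesis using h by auto
  next
    case True
    obtain l where l: "v l < x l" and ineq: "f (v - unitv h + unitv l) + f (x + unitv h - unitv l) \<le> f v + f x"
      using exch[OF M True xd h(2)] by blast
    have fxf: "f x \<noteq> \<infinity>" "f x \<noteq> -\<infinity>" using xd ni by auto
    show ?thesis
    proof (cases "l \<in> R")
      case False
      have s: "sum (v - unitv h + unitv l) R = sum x R"
        using sum_shift[of v l h R] False h(1) less.prems by (simp add: swap_eq)
      have "f x + f (x + unitv h - unitv l) \<le> f (v - unitv h + unitv l) + f (x + unitv h - unitv l)"
        using xmin s by (intro add_right_mono) auto
      also note ineq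
      finally have "f (x + unitv h - unitv l) \<le> f v" using ereal_cancel fxf by blast
      then show ?thesis using h False by blast
    next
      case True
      have s: "sum (v - unitv h + unitv l) R = sum x R + 1"
        using sum_shift[of v l h R] True h(1) less.prems by (simp add: swap_eq)
      have s2: "sum (x + unitv h - unitv l) R = sum x R"
        using sum_shift[of x h l R] True h(1) by simp
      have "f x + f (v - unitv h + unitv l) \<le> f (v - unitv h + unitv l) + f (x + unitv h - unitv l)"
      proof -
        have "f x \<le> f (x + unitv h - unitv l)" using xmin s2 by auto
        then have "f x + f (v - unitv h + unitv l) \<le> f (x + unitv h - unitv l) + f (v - unitv h + unitv l)"
          by (rule add_right_mono)
        then show ?thesis by (simp add: add.commute)
      qed
      also note ineq
      finally have le: "f (v - unitv h + unitv l) \<le> f v" using ereal_cancel fxf by blast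
      obtain h' l' where "h' \<in> R" "l' \<notin> R" "f (x + unitv h' - unitv l') \<le> f (v - unitv h + unitv l)"
        using less.hyps[of "v - unitv h + unitv l"] measure_lt[of x h v l] h l s by blast
      then show ?thesis using le by (meson order_trans)
    qed
  qed
qed

lemma conv_step:
  fixes f :: "('a::finite \<Rightarrow> int) \<Rightarrow> ereal"
  assumes M: "M_convex f" and ni: "\<forall>y. f y \<noteq> -\<infinity>" and xd: "f x < \<infinity>"
    and xmin: "\<forall>a. sum a R = sum x R \<longrightarrow> f x \<le> f a"
    and bmin: "\<forall>a. sum a R = sum x R + 1 \<longrightarrow> f b \<le> f a"
  shows "sum u R = sum x R + 2 \<Longrightarrow> f b + f b \<le> f u + f x"
proof (induction "nat (\<Sum>a\<in>UNIV. \<bar>u a - x a\<bar>)" arbitrary: u rule: less_induct)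
  case less
  obtain h where h: "h \<in> R" "x h < u h" using bigger_elem[of x R u] less.prems by auto
  have fxf: "f x \<noteq> \<infinity>" "f x \<noteq> -\<infinity>" using xd ni by auto
  show ?case
  proof (cases "f u < \<infinity>")
    case False
    then have "f u = \<infinity>" by (simp add: less_top)
    then show ?thesis using fxf by simp
  next
    case True
    obtain l where l: "u l < x l" and ineq: "f (u - unitv h + unitv l) + f (x + unitv h - unitv l) \<le> f u + f x"
      using exch[OF M True xd h(2)] by blast
    show ?thesis
    proof (cases "l \<in> R")
      case False
      have s: "sum (u - unitv h + unitv l) R = sum x R + 1"
        using sum_shift[of u l h R] False h(1) less.prems by (simp add: swap_eq)
      have s2: "sum (x + unitv h - unitv l) R = sum x R + 1"
        using sum_shift[of x h l R] False h(1) by simp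
      have "f b + f b \<le> f (u - unitv h + unitv l) + f (x + unitv h - unitv l)"
        using bmin s s2 by (intro add_mono) auto
      also note ineq
      finally show ?thesis .
    next
      case True
      have s: "sum (u - unitv h + unitv l) R = sum x R + 2"
        using sum_shift[of u l h R] True h(1) less.prems by (simp add: swap_eq)
      have s2: "sum (x + unitv h - unitv l) R = sum x R"
        using sum_shift[of x h l R] True h(1) by simp
      have "f b + f b \<le> f (u - unitv h + unitv l) + f x"
        using less.hyps[of "u - unitv h + unitv l"] measure_lt[of x h u l] h l s by blast
      also have "\<dots> \<le> f (u - unitv h + unitv l) + f (x + unitv h - unitv l)"
        using xmin s2 by (intro add_left_mono) auto
      also note ineq
      finally show ?thesis .
    qed
  qed
qed


lemma ereal_sub_cancel:
  fixes a b c :: ereal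
  assumes "c \<noteq> \<infinity>" "c \<noteq> -\<infinity>" "a - c \<le> b - c"
  shows "a \<le> b"
  using assms by (cases a; cases b; cases c) auto

lemma ereal_sub_mono:
  fixes a b c :: ereal
  assumes "c \<noteq> \<infinity>" "c \<noteq> -\<infinity>" "a \<le> b"
  shows "a - c \<le> b - c"
  using assms by (cases a; cases b; cases c) auto

lemma Mset_min:
  assumes "x \<in> Mset f R k"
  shows "\<forall>a. sum a R = sum x R \<longrightarrow> f x \<le> f a"
proof (intro allI impI)
  fix a assume s: "sum a R = sum x R"
  show "f x \<le> f a"
  proof (cases "f a < \<infinity>")
    case True
    then have "a \<in> {x\<in>effdom f. sum x R = k}" using s assms by (auto simp: Mset_def effdom_def)
    then have "zval f R k \<le> f a" unfolding zval_def by (rule INF_lower)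
    then show ?thesis using assms by (simp add: Mset_def)
  next
    case False
    then show ?thesis by (simp add: less_top)
  qed
qed

lemma Mset_intro:
  assumes "f w < \<infinity>" "sum w R = k" "\<forall>a. sum a R = k \<longrightarrow> f w \<le> f a"
  shows "w \<in> Mset f R k"
proof -
  have "zval f R k = f w"
    unfolding zval_def
  proof (rule antisym)
    show "Inf (f ` {x \<in> effdom f. sum x R = k}) \<le> f w"
      using assms by (intro INF_lower) (auto simp: effdom_def)
    show "f w \<le> Inf (f ` {x \<in> effdom f. sum x R = k})"
      using assms by (intro INF_greatest) auto
  qed
  then show ?thesis using assms by (auto simp: Mset_def effdom_def)
qed

theorem mainTheorem8:
  fixes f :: "('a::finite \<Rightarrow> int) \<Rightarrow> ereal"
    and R :: "'a set" and k :: int and x :: "'a \<Rightarrow> int" and i j :: 'a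
  assumes noninf: "\<forall>y. f y \<noteq> -\<infinity>"
    and Mconv: "M_convex f"
    and bdd: "\<exists>B. \<forall>y\<in>effdom f. \<forall>a. \<bar>y a\<bar> \<le> B"
    and Rne: "R \<noteq> {}" and Rproper: "R \<noteq> UNIV"
    and klo: "klow f R \<le> k" and kup: "k \<le> kupp f R - 2"
    and xM: "x \<in> Mset f R k"
    and iR: "i \<in> R" and jR: "j \<notin> R"
    and minij: "\<forall>h\<in>R. \<forall>l\<in>-R. dirder f x i j \<le> dirder f x h l"
    and eq: "dirder f (x + unitv i - unitv j) i j = dirder f x i j"
  shows "(\<forall>h\<in>R. \<forall>l\<in>-R. dirder f (x + unitv i - unitv j) i j
                          \<le> dirder f (x + unitv i - unitv j) h l)
         \<and> x + 2 * unitv i - 2 * unitv j \<in> Mset f R (k + 2)"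
proof -
  have xd: "f x < \<infinity>" and sx: "sum x R = k" using xM by (auto simp: Mset_def effdom_def)
  have xmin: "\<forall>a. sum a R = sum x R \<longrightarrow> f x \<le> f a" using Mset_min[OF xM] .
  obtain rx where rx: "f x = ereal rx" using xd noninf by (cases "f x") auto
  obtain B where B: "\<forall>y\<in>effdom f. \<forall>a. \<bar>y a\<bar> \<le> B" using bdd by auto
  have "effdom f \<subseteq> {g. \<forall>a. (a \<in> UNIV \<longrightarrow> g a \<in> {-B..B}) \<and> (a \<notin> UNIV \<longrightarrow> g a = 0)}"
  proof
    fix g assume "g \<in> effdom f"
    then have "\<forall>a. \<bar>g a\<bar> \<le> B" using B by blast
    then show "g \<in> {g. \<forall>a. (a \<in> UNIV \<longrightarrow> g a \<in> {-B..B}) \<and> (a \<notin> UNIV \<longrightarrow> g a = 0)}"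
      by (simp add: abs_le_iff) (metis minus_le_iff)
  qed
  moreover have "finite {g::'a \<Rightarrow> int. \<forall>a. (a \<in> UNIV \<longrightarrow> g a \<in> {-B..B}) \<and> (a \<notin> UNIV \<longrightarrow> g a = (0::int))}"
    by (rule finite_set_of_finite_funs) auto
  ultimately have fin: "finite (effdom f)" by (rule finite_subset)
  have ne: "effdom f \<noteq> {}" using Mconv by (simp add: M_convex_def)
  have "kupp f R \<in> (\<lambda>x. sum x R) ` effdom f"
    unfolding kupp_def using fin ne by (intro Max_in) auto
  then obtain v where vd: "f v < \<infinity>" and sv: "sum v R = kupp f R" by (auto simp: effdom_def)
  obtain h0 l0 where h0: "h0 \<in> R" "l0 \<notin> R" "f (x + unitv h0 - unitv l0) < \<infinity>"
  proof -
    have "sum x R < sum v R" using sv sx kup by simp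
    then show ?thesis using nbr_exists[OF Mconv noninf xd vd, of R] that by blast
  qed
  define y where "y = x + unitv i - unitv j"
  have fxf: "f x \<noteq> \<infinity>" "f x \<noteq> -\<infinity>" using xd noninf by auto
  have ybest: "f y \<le> f (x + unitv h - unitv l)" if "h \<in> R" "l \<notin> R" for h l
    using minij that ereal_sub_cancel[OF fxf] unfolding dirder_def y_def by auto
  have yd: "f y < \<infinity>" using ybest[OF h0(1,2)] h0(3) by auto
  have sy: "sum y R = k + 1" unfolding y_def using sum_shift[of x i j R] iR jR sx by simp
  have ymin: "\<forall>a. sum a R = sum x R + 1 \<longrightarrow> f y \<le> f a"
  proof (intro allI impI)
    fix a assume "sum a R = sum x R + 1"
    then obtain h l where "h \<in> R" "l \<notin> R" "f (x + unitv h - unitv l) \<le> f a"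
      using step_bound[OF Mconv noninf xd xmin Rproper] by blast
    then show "f y \<le> f a" using ybest by (meson order_trans)
  qed
  define w where "w = x + 2 * unitv i - 2 * unitv j"
  have wy: "w = y + unitv i - unitv j" unfolding w_def y_def by (rule ext) simp
  obtain ry where ry: "f y = ereal ry" using yd noninf by (cases "f y") auto
  have eq2: "f w - f y = f y - f x" using eq unfolding dirder_def y_def[symmetric] wy[symmetric] .
  obtain rw where rw: "f w = ereal rw" and rwe: "rw - ry = ry - rx"
    using eq2 rx ry noninf by (cases "f w") auto
  have sw: "sum w R = k + 2" unfolding wy using sum_shift[of y i j R] iR jR sy by simp
  have wmin: "\<forall>u. sum u R = k + 2 \<longrightarrow> f w \<le> f u"
  proof (intro allI impI)
    fix u assume su: "sum u R = k + 2"
    have c: "f y + f y \<le> f u + f x"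
      using conv_step[OF Mconv noninf xd xmin ymin] su sx by simp
    show "f w \<le> f u"
    proof (cases "f u")
      case (real r)
      then show ?thesis using c rx ry rw rwe by simp
    qed (use noninf in auto)
  qed
  have part1: "\<forall>h\<in>R. \<forall>l\<in>-R. dirder f y i j \<le> dirder f y h l"
  proof (intro ballI)
    fix h l assume h: "h \<in> R" and l: "l \<in> -R"
    have "sum (y + unitv h - unitv l) R = k + 2" using sum_shift[of y h l R] h l sy by simp
    then have "f w \<le> f (y + unitv h - unitv l)" using wmin by auto
    then show "dirder f y i j \<le> dirder f y h l"
      unfolding dirder_def wy[symmetric] using ereal_sub_mono ry by simp
  qed
  have part2: "w \<in> Mset f R (k + 2)"
    by (rule Mset_intro) (use rw sw wmin in auto)
  show ?thesis using part1 part2 unfolding y_def w_def by blast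
qed

end
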